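(* Let $y\in(0,1]$ and $A_0>0$. For every $z=u+iv\in\mathbb G$, $$\Big|\Big(z+\frac{y-1}{z}\Big)^2-4y\Big|\ge\frac{4y}{5}\max\{\gamma(z),v\}\qquad\text{and}\qquad nv\sqrt{\Big|\Big(z+\frac{y-1}{z}\Big)^2-4y\Big|}\ge \frac{4y}{5}A_0 .$$
   Context: Region $\mathbb G$ (depending on $n$, $y$, $A_0$): $a=1-\sqrt y$, $b=1+\sqrt y$, $V=4\sqrt y$, $v_0=A_0/n$, $\kappa>0$ defined by $\frac1\pi\int_{|u|\le\kappa}\frac{du}{1+u^2}=\frac34$, $\varepsilon=(2v_0\kappa)^{2/3}$; for $z=u+iv$, $\gamma(z)=\min\{||u|-a|,|b-|u||\}$; $\mathbb G=\{z=u+iv: a+\varepsilon\le|u|\le b-\varepsilon,\ v_0/\sqrt{\gamma(z)}\le v\le V\}$. *)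

theory Defs
  imports "HOL-Analysis.Analysis"
begin

definition mp_a :: "real \<Rightarrow> real" where "mp_a y = 1 - sqrt y"
definition mp_b :: "real \<Rightarrow> real" where "mp_b y = 1 + sqrt y"
definition mp_V :: "real \<Rightarrow> real" where "mp_V y = 4 * sqrt y"
definition mp_v0 :: "nat \<Rightarrow> real \<Rightarrow> real" where "mp_v0 n A0 = A0 / real n"

definition mp_kappa :: real where
  "mp_kappa = (THE k. k > 0 \<and> (1 / pi) * integral {-k..k} (\<lambda>u. 1 / (1 + u\<^sup>2)) = 3 / 4)"

definition mp_eps :: "nat \<Rightarrow> real \<Rightarrow> real" where
  "mp_eps n A0 = (2 * mp_v0 n A0 * mp_kappa) powr (2 / 3)"

definition mp_gamma :: "real \<Rightarrow> complex \<Rightarrow> real" where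
  "mp_gamma y z = min \<bar>\<bar>Re z\<bar> - mp_a y\<bar> \<bar>mp_b y - \<bar>Re z\<bar>\<bar>"

definition mp_G :: "nat \<Rightarrow> real \<Rightarrow> real \<Rightarrow> complex set" where
  "mp_G n y A0 = {z. mp_a y + mp_eps n A0 \<le> \<bar>Re z\<bar> \<and> \<bar>Re z\<bar> \<le> mp_b y - mp_eps n A0
      \<and> mp_v0 n A0 / sqrt (mp_gamma y z) \<le> Im z \<and> Im z \<le> mp_V y}"

end

theory Submission
  imports Defs
begin

lemma integral_atan:
  assumes "k > 0"
  shows "integral {-k..k} (\<lambda>u. 1 / (1 + u\<^sup>2)) = 2 * arctan k"
proof -
  have "((\<lambda>u. 1 / (1 + u\<^sup>2)) has_integral (arctan k - arctan (-k))) {-k..k}"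
  proof (rule fundamental_theorem_of_calculus)
    show "-k \<le> k" using assms by simp
    fix x :: real assume "x \<in> {-k..k}"
    have "(arctan has_real_derivative inverse (1 + x\<^sup>2)) (at x within {-k..k})"
      by (rule has_field_derivative_at_within[OF DERIV_arctan])
    then show "(arctan has_vector_derivative 1 / (1 + x\<^sup>2)) (at x within {-k..k})"
      by (simp add: has_real_derivative_iff_has_vector_derivative[symmetric] divide_inverse)
  qed
  then show ?thesis by (simp add: integral_unique arctan_minus)
qed

lemma kappa_pos: "mp_kappa > 0"
proof -
  define t where "t = tan (3 * pi / 8)"
  have r: "0 < 3 * pi / 8" "3 * pi / 8 < pi / 2" using pi_gt_zero by auto
  have tpos: "t > 0" unfolding t_def using r by (intro tan_gt_zero) auto
  have at: "arctan t = 3 * pi / 8" unfolding t_def using r by (intro arctan_tan) auto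
  have "mp_kappa = t" unfolding mp_kappa_def
  proof (rule the_equality)
    show "t > 0 \<and> (1 / pi) * integral {-t..t} (\<lambda>u. 1 / (1 + u\<^sup>2)) = 3 / 4"
      using tpos at pi_gt_zero by (simp add: integral_atan field_simps)
  next
    fix k assume h: "k > 0 \<and> (1 / pi) * integral {-k..k} (\<lambda>u. 1 / (1 + u\<^sup>2)) = 3 / 4"
    then have k0: "k > 0" and e: "(1 / pi) * integral {-k..k} (\<lambda>u. 1 / (1 + u\<^sup>2)) = 3 / 4" by auto
    then have "(1/pi) * (2 * arctan k) = 3/4" by (simp add: integral_atan)
    then have ak: "arctan k = 3 * pi / 8" using pi_gt_zero by (simp add: field_simps)
    have "tan (arctan k) = t" unfolding t_def ak by (rule refl)
    then show "k = t" by (simp add: tan_arctan)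
  qed
  then show ?thesis using tpos by simp
qed

lemma factor:
  fixes z :: complex and y :: real
  assumes "z \<noteq> 0" "y \<ge> 0"
  shows "(z + (complex_of_real y - 1) / z)\<^sup>2 - 4 * complex_of_real y
     = (z - of_real (mp_a y)) * (z + of_real (mp_a y)) * (z - of_real (mp_b y)) * (z + of_real (mp_b y)) / z\<^sup>2"
proof -
  define s where "s = sqrt y"
  have y: "complex_of_real y = (of_real s)^2" unfolding s_def using assms
    by (simp flip: of_real_power)
  show ?thesis unfolding mp_a_def mp_b_def s_def[symmetric] y using assms(1)
    by (simp add: field_simps power2_eq_square)
qed

lemma cmod_ge_Re:
  fixes z :: complex and c :: real
  assumes "Re z \<ge> 0" "c \<ge> 0"
  shows "cmod (z + of_real c) \<ge> cmod z"
  unfolding cmod_def using assms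
  by (intro real_sqrt_le_mono) (simp add: power2_eq_square mult_mono)

lemma key:
  fixes z :: complex and y :: real
  assumes "Re z \<ge> 0" "z \<noteq> 0" "0 < y" "y \<le> 1"
  shows "cmod ((z - of_real (mp_a y)) * (z + of_real (mp_a y)) * (z - of_real (mp_b y)) * (z + of_real (mp_b y))) / (cmod z)\<^sup>2
    \<ge> sqrt y * max (min \<bar>Re z - mp_a y\<bar> \<bar>mp_b y - Re z\<bar>) \<bar>Im z\<bar>"
proof -
  let ?a = "mp_a y" and ?b = "mp_b y"
  have a0: "?a \<ge> 0" unfolding mp_a_def using assms by simp
  have b0: "?b \<ge> 0" unfolding mp_b_def using real_sqrt_ge_zero[of y] assms by simp
  have ba: "?b - ?a = 2 * sqrt y" unfolding mp_a_def mp_b_def by simp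
  have A: "cmod (z + of_real ?a) \<ge> cmod z" using cmod_ge_Re[OF assms(1) a0] .
  have B: "cmod (z + of_real ?b) \<ge> cmod z" using cmod_ge_Re[OF assms(1) b0] .
  have z0: "cmod z > 0" using assms by simp
  have AB: "cmod (z + of_real ?a) * cmod (z + of_real ?b) \<ge> (cmod z)\<^sup>2"
    using A B z0 by (simp add: power2_eq_square mult_mono)
  have ca1: "cmod (z - of_real ?a) \<ge> \<bar>Re z - ?a\<bar>" using abs_Re_le_cmod[of "z - of_real ?a"] by simp
  have ca2: "cmod (z - of_real ?a) \<ge> \<bar>Im z\<bar>" using abs_Im_le_cmod[of "z - of_real ?a"] by simp
  have cb1: "cmod (z - of_real ?b) \<ge> \<bar>?b - Re z\<bar>" using abs_Re_le_cmod[of "z - of_real ?b"] by simp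
  have cb2: "cmod (z - of_real ?b) \<ge> \<bar>Im z\<bar>" using abs_Im_le_cmod[of "z - of_real ?b"] by simp
  let ?M = "max (min \<bar>Re z - ?a\<bar> \<bar>?b - Re z\<bar>) \<bar>Im z\<bar>"
  have M0: "?M \<ge> 0" by simp
  have sy: "sqrt y \<ge> 0" using assms by simp
  have prod: "cmod (z - of_real ?a) * cmod (z - of_real ?b) \<ge> sqrt y * ?M"
  proof (cases "\<bar>Re z - ?a\<bar> \<ge> sqrt y")
    case True
    have "cmod (z - of_real ?b) \<ge> ?M" using cb1 cb2 by linarith
    then show ?thesis using mult_mono[of "sqrt y" "cmod (z - of_real ?a)" ?M "cmod (z - of_real ?b)"] True ca1 M0 sy by linarith
  next
    case False
    then have "\<bar>?b - Re z\<bar> \<ge> sqrt y" using ba by linarith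
    moreover have "cmod (z - of_real ?a) \<ge> ?M" using ca1 ca2 by linarith
    ultimately show ?thesis using mult_mono[of "sqrt y" "cmod (z - of_real ?b)" ?M "cmod (z - of_real ?a)"] cb1 M0 sy by (simp add: mult.commute)
  qed
  have "cmod ((z - of_real ?a) * (z + of_real ?a) * (z - of_real ?b) * (z + of_real ?b)) / (cmod z)\<^sup>2
      = cmod (z - of_real ?a) * cmod (z - of_real ?b) * ((cmod (z + of_real ?a) * cmod (z + of_real ?b)) / (cmod z)\<^sup>2)"
    by (simp add: norm_mult)
  also have "\<dots> \<ge> cmod (z - of_real ?a) * cmod (z - of_real ?b) * 1"
    using AB z0 by (intro mult_left_mono) (auto simp: field_simps)
  finally show ?thesis using prod by linarith
qed

lemma first:
  fixes z :: complex and y :: real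
  assumes "0 < y" "y \<le> 1"
  shows "cmod ((z + (complex_of_real y - 1) / z)\<^sup>2 - 4 * complex_of_real y)
           \<ge> 4 * y / 5 * max (mp_gamma y z) \<bar>Im z\<bar>"
proof (cases "z = 0")
  case True
  have "mp_gamma y z \<le> 1" unfolding mp_gamma_def mp_a_def mp_b_def using True assms by auto
  then show ?thesis using True assms by (simp add: norm_mult)
next
  case False
  let ?P = "\<lambda>z. cmod ((z - of_real (mp_a y)) * (z + of_real (mp_a y)) * (z - of_real (mp_b y)) * (z + of_real (mp_b y))) / (cmod z)\<^sup>2"
  define w where "w = (if Re z \<ge> 0 then z else - z)"
  have w0: "Re w \<ge> 0" "w \<noteq> 0" unfolding w_def using False by auto
  have Pw': "?P w = ?P z"
  proof (cases "Re z \<ge> 0")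
    case True then show ?thesis unfolding w_def by simp
  next
    case False
    have "(-z - of_real (mp_a y)) * (-z + of_real (mp_a y)) * (-z - of_real (mp_b y)) * (-z + of_real (mp_b y))
        = (z - of_real (mp_a y)) * (z + of_real (mp_a y)) * (z - of_real (mp_b y)) * (z + of_real (mp_b y))"
      by (simp add: algebra_simps)
    then show ?thesis unfolding w_def using False by simp
  qed
  have gw: "mp_gamma y z = min \<bar>Re w - mp_a y\<bar> \<bar>mp_b y - Re w\<bar>" "\<bar>Im w\<bar> = \<bar>Im z\<bar>"
    unfolding mp_gamma_def w_def by auto
  have K: "?P z \<ge> sqrt y * max (mp_gamma y z) \<bar>Im z\<bar>"
    using key[OF w0 assms] Pw' gw by simp
  have s: "sqrt y \<ge> 4 * y / 5"
  proof -
    have "sqrt y \<le> 1" using assms by simp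
    then have "sqrt y * sqrt y \<le> sqrt y * 1" using assms by (intro mult_left_mono) auto
    moreover have "y = sqrt y * sqrt y" using assms by simp
    ultimately show ?thesis using assms by linarith
  qed
  have "cmod ((z + (complex_of_real y - 1) / z)\<^sup>2 - 4 * complex_of_real y) = ?P z"
    using factor[OF False less_imp_le[OF assms(1)]] assms by (simp add: norm_divide norm_power)
  also have "?P z \<ge> 4 * y / 5 * max (mp_gamma y z) \<bar>Im z\<bar>"
    using K s by (meson order_trans mult_right_mono max.cobounded2 abs_ge_zero order_trans[OF abs_ge_zero max.cobounded2])
  finally show ?thesis .
qed

theorem mainTheorem13:
  fixes n :: nat and y A0 :: real and z :: complex
  assumes "n \<ge> 1" and "0 < y" and "y \<le> 1" and "A0 > 0"
    and "z \<in> mp_G n y A0"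
  shows "cmod ((z + (complex_of_real y - 1) / z)\<^sup>2 - 4 * complex_of_real y)
           \<ge> 4 * y / 5 * max (mp_gamma y z) (Im z)
       \<and> real n * Im z * sqrt (cmod ((z + (complex_of_real y - 1) / z)\<^sup>2 - 4 * complex_of_real y))
           \<ge> 4 * y / 5 * A0"
proof -
  let ?X = "cmod ((z + (complex_of_real y - 1) / z)\<^sup>2 - 4 * complex_of_real y)"
  let ?g = "mp_gamma y z"
  have F: "?X \<ge> 4 * y / 5 * max ?g \<bar>Im z\<bar>" using first assms(2,3) by blast
  have c0: "4 * y / 5 \<ge> 0" using assms by simp
  have F1: "?X \<ge> 4 * y / 5 * max ?g (Im z)"
    using F c0 by (smt (verit) mult_left_mono max.mono abs_ge_self order_refl)
  have v0: "mp_v0 n A0 > 0" unfolding mp_v0_def using assms by simp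
  have eps: "mp_eps n A0 > 0" unfolding mp_eps_def using v0 kappa_pos by simp
  have G: "mp_a y + mp_eps n A0 \<le> \<bar>Re z\<bar>" "\<bar>Re z\<bar> \<le> mp_b y - mp_eps n A0"
     "mp_v0 n A0 / sqrt ?g \<le> Im z" using assms(5) unfolding mp_G_def by auto
  have g0: "?g > 0" unfolding mp_gamma_def using G(1,2) eps by auto
  have Xg: "?X \<ge> 4 * y / 5 * ?g" using F1 c0 by (smt (verit) mult_left_mono max.cobounded1)
  have sg: "sqrt ?g > 0" using g0 by simp
  have nv: "real n * Im z \<ge> A0 / sqrt ?g"
  proof -
    have "real n * Im z \<ge> real n * (mp_v0 n A0 / sqrt ?g)" using G(3) by (intro mult_left_mono) auto
    also have "real n * (mp_v0 n A0 / sqrt ?g) = A0 / sqrt ?g" unfolding mp_v0_def using assms(1) by simp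
    finally show ?thesis by simp
  qed
  have sX: "sqrt ?X \<ge> sqrt (4 * y / 5) * sqrt ?g" using Xg by (simp add: real_sqrt_mult[symmetric])
  have "real n * Im z * sqrt ?X \<ge> A0 / sqrt ?g * (sqrt (4 * y / 5) * sqrt ?g)"
  proof (rule mult_mono[OF nv sX])
    have "A0 / sqrt ?g \<ge> 0" using assms(4) sg by simp
    then show "0 \<le> real n * Im z" using nv by linarith
    show "0 \<le> sqrt (4 * y / 5) * sqrt ?g" using c0 g0 by simp
  qed
  also have "A0 / sqrt ?g * (sqrt (4 * y / 5) * sqrt ?g) = A0 * sqrt (4 * y / 5)" using sg by simp
  finally have H: "real n * Im z * sqrt ?X \<ge> A0 * sqrt (4 * y / 5)" .
  have c1: "4 * y / 5 \<le> 1" using assms by simp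
  have "sqrt (4 * y / 5) \<ge> 4 * y / 5"
  proof -
    have s1: "sqrt (4*y/5) \<le> 1" using c1 by simp
    have "sqrt (4*y/5) * sqrt (4*y/5) \<le> sqrt (4*y/5) * 1"
      using s1 c0 by (intro mult_left_mono) auto
    moreover have "sqrt (4*y/5) * sqrt (4*y/5) = 4*y/5" using c0 by simp
    ultimately show ?thesis by linarith
  qed
  then have "A0 * sqrt (4 * y / 5) \<ge> A0 * (4 * y / 5)" using assms(4) by (intro mult_left_mono) auto
  with H F1 show ?thesis by (simp add: mult.commute)
qed

end
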